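(* Let $n\ge 2$ and $r>2$ be integers, and let $u,v$ be vertices of $G(n,r)$ with graph distance $d_{G(n,r)}(u,v)\le 2$. Then the number of moves $b\in\mathcal{B}$ such that both $u+b$ and $v+b$ have all entries non-negative (i.e. $b$ is a valid move from both $u$ and $v$) is at least $\binom{n}{2}$.
   Context: For integers $n,r\ge 1$, $G(n,r)$ is the simple undirected graph whose vertices are the $n\times n$ matrices with non-negative integer entries all of whose row sums and column sums equal $r$. Let $e_{ij}$ be the $n\times n$ matrix with a $1$ in position $(i,j)$ and $0$ elsewhere, and let $\mathcal{B}=\{\pm(e_{ij}+e_{kl}-e_{il}-e_{kj}) : 1\le i<k\le n,\ 1\le j<l\le n\}$ (the Markov moves). Two vertices $u,v$ are adjacent iff $u-v\in\mathcal{B}$; distance is the usual shortest-path distance in this graph. *)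

theory Defs
  imports Main
begin

text \<open>n x n integer matrices are represented as functions nat => nat => int,
  indices 0..<n; entries outside the index range are required to be 0.\<close>

definition e_mat :: "nat \<Rightarrow> nat \<Rightarrow> nat \<Rightarrow> nat \<Rightarrow> int" where
  "e_mat i j = (\<lambda>a b. if a = i \<and> b = j then 1 else 0)"

definition is_vertex :: "nat \<Rightarrow> nat \<Rightarrow> (nat \<Rightarrow> nat \<Rightarrow> int) \<Rightarrow> bool" where
  "is_vertex n r M \<longleftrightarrow>
     (\<forall>a b. M a b \<ge> 0) \<and>
     (\<forall>a b. (a \<ge> n \<or> b \<ge> n) \<longrightarrow> M a b = 0) \<and>
     (\<forall>a<n. (\<Sum>b<n. M a b) = int r) \<and>
     (\<forall>b<n. (\<Sum>a<n. M a b) = int r)"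

definition markov_moves :: "nat \<Rightarrow> (nat \<Rightarrow> nat \<Rightarrow> int) set" where
  "markov_moves n = {(\<lambda>a b. s * (e_mat i j a b + e_mat k l a b - e_mat i l a b - e_mat k j a b)) | s i j k l.
      (s = 1 \<or> s = -1) \<and> i < k \<and> k < n \<and> j < l \<and> l < n}"

definition G_adj :: "nat \<Rightarrow> nat \<Rightarrow> (nat \<Rightarrow> nat \<Rightarrow> int) \<Rightarrow> (nat \<Rightarrow> nat \<Rightarrow> int) \<Rightarrow> bool" where
  "G_adj n r u v \<longleftrightarrow> is_vertex n r u \<and> is_vertex n r v \<and> (\<lambda>a b. u a b - v a b) \<in> markov_moves n"

definition G_dist_le :: "nat \<Rightarrow> nat \<Rightarrow> (nat \<Rightarrow> nat \<Rightarrow> int) \<Rightarrow> (nat \<Rightarrow> nat \<Rightarrow> int) \<Rightarrow> nat \<Rightarrow> bool" where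
  "G_dist_le n r u v d \<longleftrightarrow>
     (\<exists>k\<le>d. (u, v) \<in> ({(x, y). G_adj n r x y}) ^^ k)"

end

theory Submission
  imports Defs
begin

definition nm :: "nat \<Rightarrow> nat \<Rightarrow> nat \<Rightarrow> nat \<Rightarrow> nat \<Rightarrow> nat \<Rightarrow> int" where
  "nm i j k l = (\<lambda>a b. e_mat i l a b + e_mat k j a b - e_mat i j a b - e_mat k l a b)"

lemma nm_sym: "nm i j k l = nm k l i j"
  by (auto simp: nm_def fun_eq_iff)

lemma nm_neg: assumes "i \<noteq> k" "j \<noteq> l"
  shows "nm i j k l a b < 0 \<longleftrightarrow> (a = i \<and> b = j) \<or> (a = k \<and> b = l)"
  using assms by (auto simp: nm_def e_mat_def)

lemma nm_ge: assumes "i \<noteq> k" "j \<noteq> l" shows "nm i j k l a b \<ge> -1"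
  using assms by (auto simp: nm_def e_mat_def)

lemma nm_mem_aux: assumes "i < k" "k < n" "j < n" "l < n" "j \<noteq> l"
  shows "nm i j k l \<in> markov_moves n"
proof (cases "j < l")
  case True
  have "nm i j k l = (\<lambda>a b. (-1) * (e_mat i j a b + e_mat k l a b - e_mat i l a b - e_mat k j a b))"
    by (auto simp: nm_def fun_eq_iff)
  then show ?thesis unfolding markov_moves_def using assms True by blast
next
  case False
  then have "l < j" using assms by simp
  have "nm i j k l = (\<lambda>a b. 1 * (e_mat i l a b + e_mat k j a b - e_mat i j a b - e_mat k l a b))"
    by (auto simp: nm_def fun_eq_iff)
  then show ?thesis unfolding markov_moves_def using assms \<open>l<j\<close> by blast
qed

lemma nm_mem: assumes "i < n" "k < n" "j < n" "l < n" "i \<noteq> k" "j \<noteq> l"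
  shows "nm i j k l \<in> markov_moves n"
proof (cases "i < k")
  case True then show ?thesis using assms nm_mem_aux by blast
next
  case False
  then have "k < i" using assms by simp
  then show ?thesis using assms nm_mem_aux[of k i n l j] nm_sym by metis
qed

lemma fin_moves: "finite (markov_moves n)"
proof -
  let ?f = "\<lambda>(s::int,i,j,k,l). (\<lambda>a b. s * (e_mat i j a b + e_mat k l a b - e_mat i l a b - e_mat k j a b))"
  have "markov_moves n \<subseteq> ?f ` ({1,-1} \<times> {..<n} \<times> {..<n} \<times> {..<n} \<times> {..<n})"
  proof
    fix x assume "x \<in> markov_moves n"
    then obtain s i j k l where x: "x = (\<lambda>a b. s * (e_mat i j a b + e_mat k l a b - e_mat i l a b - e_mat k j a b))"
      and h: "(s = 1 \<or> s = -1)" "i < k" "k < n" "j < l" "l < n"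
      unfolding markov_moves_def by blast
    show "x \<in> ?f ` ({1,-1} \<times> {..<n} \<times> {..<n} \<times> {..<n} \<times> {..<n})"
      by (rule image_eqI[where x="(s,i,j,k,l)"]) (use x h in auto)
  qed
  then show ?thesis by (rule finite_subset) auto
qed

lemma sum_lt_choose: "(\<Sum>k<n. k) = n choose 2"
  by (induction n) (auto simp: numeral_2_eq_2)

lemma comb:
  fixes n :: nat and M :: "nat \<Rightarrow> nat \<Rightarrow> bool" and T :: "(nat \<Rightarrow> nat \<Rightarrow> int) set"
  assumes rows: "\<forall>i<n. \<exists>c<n. M i c" and cols: "\<forall>c<n. \<exists>i<n. M i c"
    and fin: "finite T"
    and inT: "\<And>i j k l. i<n \<Longrightarrow> j<n \<Longrightarrow> k<n \<Longrightarrow> l<n \<Longrightarrow> i\<noteq>k \<Longrightarrow> j\<noteq>l \<Longrightarrow> M i j \<Longrightarrow> M k l \<Longrightarrow> nm i j k l \<in> T"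
  shows "n choose 2 \<le> card T"
proof -
  obtain f where f: "\<forall>i<n. f i < n \<and> M i (f i)" using rows by metis
  obtain \<rho> where \<rho>: "\<forall>c<n. \<rho> c < n \<and> M (\<rho> c) c" using cols by metis
  define Im where "Im = f ` {..<n}"
  define J where "J = {..<n} - Im"
  define K where "K = {k. k < n \<and> (\<exists>i<k. f i = f k)}"
  define F where "F = {k. k < n \<and> (\<forall>i<k. f i \<noteq> f k)}"
  define P where "P = Sigma {..<n} (\<lambda>k. {..<k})"
  define D1 where "D1 = {(k,i). k < n \<and> i < k \<and> f i \<noteq> f k}"
  define E where "E = {(k,i). k < n \<and> i < k \<and> f i = f k}"
  define D2 where "D2 = Sigma J (\<lambda>j. {..<n} - {\<rho> j})"
  define g1 where "g1 = (\<lambda>(k,i). nm i (f i) k (f k))"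
  define g2 where "g2 = (\<lambda>(j,i). nm (\<rho> j) j i (f i))"
  have ImF: "Im = f ` F"
  proof
    show "f ` F \<subseteq> Im" unfolding Im_def F_def by auto
    show "Im \<subseteq> f ` F"
    proof
      fix y assume "y \<in> Im"
      then obtain k where k: "k < n" "y = f k" unfolding Im_def by auto
      define k0 where "k0 = (LEAST k'. f k' = f k)"
      have "f k0 = f k" unfolding k0_def by (rule LeastI) simp
      moreover have "k0 \<le> k" unfolding k0_def by (rule Least_le) simp
      moreover have "\<forall>i<k0. f i \<noteq> f k" unfolding k0_def using not_less_Least by blast
      ultimately have "k0 \<in> F" using k unfolding F_def by auto
      then show "y \<in> f ` F" using k \<open>f k0 = f k\<close> by (metis image_eqI)
    qed
  qed
  have injF: "inj_on f F"
  proof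
    fix x y assume "x \<in> F" "y \<in> F" "f x = f y"
    then have "\<forall>i<x. f i \<noteq> f x" "\<forall>i<y. f i \<noteq> f y" "f x = f y" unfolding F_def by auto
    then show "x = y" by (metis nat_neq_iff)
  qed
  have cardIm: "card Im = card F" using ImF injF by (simp add: card_image)
  have KF: "{..<n} = K \<union> F" "K \<inter> F = {}" unfolding K_def F_def by auto
  have cKF: "card K + card F = n"
    using KF card_Un_disjoint[of K F] by (metis card_lessThan finite_Un finite_lessThan)
  have ImS: "Im \<subseteq> {..<n}" using f unfolding Im_def by auto
  have cJ: "card J = card K"
    unfolding J_def using ImS cardIm cKF by (simp add: card_Diff_subset finite_subset)
  have cP: "card P = n choose 2"
    unfolding P_def by (simp add: card_SigmaI sum_lt_choose)
  have PDE: "P = D1 \<union> E" "D1 \<inter> E = {}" unfolding P_def D1_def E_def by auto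
  have finP: "finite P" unfolding P_def by auto
  have cDE: "card D1 + card E = n choose 2"
    using PDE finP cP card_Un_disjoint[of D1 E] by (metis finite_Un)
  have "E \<subseteq> Sigma K (\<lambda>k. {..<n-1})" unfolding E_def K_def by auto
  then have cE: "card E \<le> card K * (n-1)"
    by (metis card_cartesian_product card_lessThan card_mono finite_SigmaI finite_lessThan
        finite_subset KF(1) finite_Un)
  have cD2: "card D2 = card J * (n-1)"
  proof -
    have "card D2 = (\<Sum>j\<in>J. card ({..<n} - {\<rho> j}))"
      unfolding D2_def by (rule card_SigmaI) (auto simp: J_def)
    also have "\<dots> = (\<Sum>j\<in>J. n - 1)"
      by (rule sum.cong) (use \<rho> in \<open>auto simp: J_def\<close>)
    finally show ?thesis by simp
  qed
  have neg: "\<And>i j k l a b. i \<noteq> k \<Longrightarrow> j \<noteq> l \<Longrightarrow> nm i j k l a b < 0 \<longleftrightarrow> (a = i \<and> b = j) \<or> (a = k \<and> b = l)"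
    by (rule nm_neg)
  have inj1: "inj_on g1 D1"
  proof
    fix x y assume x: "x \<in> D1" and y: "y \<in> D1" and e: "g1 x = g1 y"
    obtain k i where xk: "x = (k,i)" by fastforce
    obtain k' i' where yk: "y = (k',i')" by fastforce
    have h: "i < k" "k < n" "f i \<noteq> f k" "i' < k'" "k' < n" "f i' \<noteq> f k'"
      using x y xk yk unfolding D1_def by auto
    have e': "\<And>a b. nm i (f i) k (f k) a b = nm i' (f i') k' (f k') a b"
      using e xk yk unfolding g1_def by simp
    have "nm i (f i) k (f k) i (f i) < 0" "nm i (f i) k (f k) k (f k) < 0"
      using h neg[of i k "f i" "f k"] by auto
    then have "nm i' (f i') k' (f k') i (f i) < 0" "nm i' (f i') k' (f k') k (f k) < 0"
      using e' by auto
    then have "(i = i' \<or> i = k')" "(k = i' \<or> k = k')"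
      using h neg[of i' k' "f i'" "f k'"] by auto
    then show "x = y" using h xk yk by auto
  qed
  have inj2: "inj_on g2 D2"
  proof
    fix x y assume x: "x \<in> D2" and y: "y \<in> D2" and e: "g2 x = g2 y"
    obtain j i where xk: "x = (j,i)" by fastforce
    obtain j' i' where yk: "y = (j',i')" by fastforce
    have h: "j < n" "j \<notin> Im" "i < n" "i \<noteq> \<rho> j" "j' < n" "j' \<notin> Im" "i' < n" "i' \<noteq> \<rho> j'"
      using x y xk yk unfolding D2_def J_def by auto
    have fi: "f i \<in> Im" "f i' \<in> Im" using h unfolding Im_def by auto
    have e': "\<And>a b. nm (\<rho> j) j i (f i) a b = nm (\<rho> j') j' i' (f i') a b"
      using e xk yk unfolding g2_def by simp
    have d1: "\<rho> j \<noteq> i" "j \<noteq> f i" "\<rho> j' \<noteq> i'" "j' \<noteq> f i'" using h fi by auto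
    have "nm (\<rho> j) j i (f i) (\<rho> j) j < 0" "nm (\<rho> j) j i (f i) i (f i) < 0"
      using d1 neg[of "\<rho> j" i j "f i"] by auto
    then have a: "nm (\<rho> j') j' i' (f i') (\<rho> j) j < 0" "nm (\<rho> j') j' i' (f i') i (f i) < 0"
      using e' by auto
    from a(1) have "j = j'" using d1 neg[of "\<rho> j'" i' j' "f i'"] h fi by auto
    moreover from a(2) have "i = i' \<or> (f i = j')" using d1 neg[of "\<rho> j'" i' j' "f i'"] by auto
    ultimately show "x = y" using h fi xk yk by auto
  qed
  have disj: "g1 ` D1 \<inter> g2 ` D2 = {}"
  proof (rule ccontr)
    assume "g1 ` D1 \<inter> g2 ` D2 \<noteq> {}"
    then obtain x y where xy: "x \<in> D1" "y \<in> D2" "g1 x = g2 y" by blast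
    obtain k i where xk: "x = (k,i)" by fastforce
    obtain j i' where yk: "y = (j,i')" by fastforce
    have A: "(k,i) \<in> D1" "(j,i') \<in> D2" and e: "g1 (k,i) = g2 (j,i')" using xy xk yk by auto
    have h: "i < k" "k < n" "f i \<noteq> f k" "j < n" "j \<notin> Im" "i' < n" "i' \<noteq> \<rho> j"
      using A unfolding D1_def D2_def J_def by auto
    have fi: "f i \<in> Im" "f k \<in> Im" "f i' \<in> Im" using h unfolding Im_def by auto
    have "nm (\<rho> j) j i' (f i') (\<rho> j) j < 0"
      using h fi neg[of "\<rho> j" i' j "f i'"] by auto
    then have "nm i (f i) k (f k) (\<rho> j) j < 0" using e unfolding g1_def g2_def by simp
    then have "j = f i \<or> j = f k" using h neg[of i k "f i" "f k"] by auto
    then show False using h fi by auto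
  qed
  have sub: "g1 ` D1 \<union> g2 ` D2 \<subseteq> T"
  proof
    fix x assume "x \<in> g1 ` D1 \<union> g2 ` D2"
    then show "x \<in> T"
    proof
      assume "x \<in> g1 ` D1"
      then obtain k i where "(k,i) \<in> D1" "x = nm i (f i) k (f k)" unfolding g1_def by auto
      then show ?thesis using f inT[of i "f i" k "f k"] unfolding D1_def by auto
    next
      assume "x \<in> g2 ` D2"
      then obtain j i where A: "(j,i) \<in> D2" "x = nm (\<rho> j) j i (f i)" unfolding g2_def by auto
      then have h: "j < n" "j \<notin> Im" "i < n" "i \<noteq> \<rho> j" unfolding D2_def J_def by auto
      have "f i \<in> Im" using h unfolding Im_def by auto
      then show ?thesis using A h f \<rho> inT[of "\<rho> j" j i "f i"] by auto
    qed
  qed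
  have finD: "finite D1" "finite D2" using finP PDE unfolding D2_def J_def
    by (auto intro: finite_subset)
  have "card (g1 ` D1 \<union> g2 ` D2) = card D1 + card D2"
    using card_Un_disjoint[OF _ _ disj] finD inj1 inj2 by (simp add: card_image)
  moreover have "card (g1 ` D1 \<union> g2 ` D2) \<le> card T" using sub fin by (rule card_mono[rotated])
  moreover have "card D2 = card K * (n-1)" using cD2 cJ by simp
  ultimately show ?thesis using cDE cE by linarith
qed


definition rb :: "nat \<Rightarrow> nat \<Rightarrow> nat \<Rightarrow> int" where
  "rb j l c = (if c = j then 1 else 0) + (if c = l then 1 else 0)"

lemma rb_nonneg: "rb j l c \<ge> 0" by (simp add: rb_def)

lemma rb_sum: "j < n \<Longrightarrow> l < n \<Longrightarrow> (\<Sum>c<n. rb j l c) = 2"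
  by (simp add: rb_def sum.distrib)

lemma move_bound: assumes "b \<in> markov_moves n"
  shows "\<exists>j l i k. j<n \<and> l<n \<and> i<n \<and> k<n \<and> (\<forall>a c. \<bar>b a c\<bar> \<le> rb j l c \<and> \<bar>b a c\<bar> \<le> rb i k a)"
proof -
  from assms obtain s i j k l where b: "b = (\<lambda>a c. s * (e_mat i j a c + e_mat k l a c - e_mat i l a c - e_mat k j a c))"
    and h: "(s = 1 \<or> s = -1)" "i < k" "k < n" "j < l" "l < n"
    unfolding markov_moves_def by blast
  have "\<bar>b a c\<bar> \<le> rb j l c \<and> \<bar>b a c\<bar> \<le> rb i k a" for a c
  proof -
    have e1: "\<bar>b a c\<bar> = \<bar>e_mat i j a c + e_mat k l a c - e_mat i l a c - e_mat k j a c\<bar>"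
      using h(1) by (auto simp: b abs_mult)
    have e2: "\<bar>e_mat i j a c + e_mat k l a c - e_mat i l a c - e_mat k j a c\<bar> \<le> rb j l c"
      using h(2,4) by (simp add: rb_def e_mat_def)
    have e3: "\<bar>e_mat i j a c + e_mat k l a c - e_mat i l a c - e_mat k j a c\<bar> \<le> rb i k a"
      using h(2,4) by (simp add: rb_def e_mat_def)
    show ?thesis using e1 e2 e3 by simp
  qed
  then have X: "\<forall>a c. \<bar>b a c\<bar> \<le> rb j l c \<and> \<bar>b a c\<bar> \<le> rb i k a" by blast
  have "i < n" "j < n" using h by auto
  show ?thesis apply (rule exI[of _ "j"], rule exI[of _ "l"], rule exI[of _ "i"], rule exI[of _ "k"]) using h X by simp
qed

lemma dist_bound_ex:
  assumes "G_dist_le n r u v 2" "n \<ge> 2"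
  shows "\<exists>j1 l1 j2 l2 i1 k1 i2 k2. j1<n \<and> l1<n \<and> j2<n \<and> l2<n \<and> i1<n \<and> k1<n \<and> i2<n \<and> k2<n \<and>
     (\<forall>a c. \<bar>u a c - v a c\<bar> \<le> rb j1 l1 c + rb j2 l2 c \<and> \<bar>u a c - v a c\<bar> \<le> rb i1 k1 a + rb i2 k2 a)"
proof -
  have n0: "0 < n" using assms(2) by simp
  obtain k where k: "k \<le> 2" "(u, v) \<in> {(x, y). G_adj n r x y} ^^ k"
    using assms(1) unfolding G_dist_le_def by blast
  have cs: "k = 0 \<or> k = 1 \<or> k = 2" using k(1) by auto
  have c0: ?thesis if "k = 0"
  proof -
    have uv: "u = v" using k that by simp
    show ?thesis
      apply (rule exI[of _ "0"], rule exI[of _ "0"], rule exI[of _ "0"], rule exI[of _ "0"], rule exI[of _ "0"], rule exI[of _ "0"], rule exI[of _ "0"], rule exI[of _ "0"]) using uv n0 rb_nonneg by (auto intro: add_nonneg_nonneg)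
  qed
  have c1: ?thesis if "k = 1"
  proof -
    have "G_adj n r u v" using k that by simp
    then have "(\<lambda>a b. u a b - v a b) \<in> markov_moves n" unfolding G_adj_def by blast
    from move_bound[OF this] obtain j l i k' where h: "j<n" "l<n" "i<n" "k'<n"
      "\<forall>a c. \<bar>u a c - v a c\<bar> \<le> rb j l c \<and> \<bar>u a c - v a c\<bar> \<le> rb i k' a" by auto
    have X: "\<forall>a c. \<bar>u a c - v a c\<bar> \<le> rb j l c + rb 0 0 c \<and> \<bar>u a c - v a c\<bar> \<le> rb i k' a + rb 0 0 a"
    proof (intro allI)
      fix a c show "\<bar>u a c - v a c\<bar> \<le> rb j l c + rb 0 0 c \<and> \<bar>u a c - v a c\<bar> \<le> rb i k' a + rb 0 0 a"
        using h(5)[rule_format, of a c] rb_nonneg[of 0 0 c] rb_nonneg[of 0 0 a] by linarith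
    qed
    show ?thesis apply (rule exI[of _ "j"], rule exI[of _ "l"], rule exI[of _ "0"], rule exI[of _ "0"], rule exI[of _ "i"], rule exI[of _ "k'"], rule exI[of _ "0"], rule exI[of _ "0"]) using h n0 X by simp
  qed
  have c2: ?thesis if "k = 2"
  proof -
    have "(u, v) \<in> {(x, y). G_adj n r x y} ^^ Suc 1" using k that by (simp add: numeral_2_eq_2)
    then obtain w where "(u, w) \<in> {(x, y). G_adj n r x y} ^^ 1" "(w, v) \<in> {(x, y). G_adj n r x y}"
      by (rule relpow_Suc_E)
    then have "G_adj n r u w" "G_adj n r w v" by auto
    then have m1: "(\<lambda>a b. u a b - w a b) \<in> markov_moves n"
      and m2: "(\<lambda>a b. w a b - v a b) \<in> markov_moves n" unfolding G_adj_def by blast+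
    from move_bound[OF m1] obtain j l i k' where h: "j<n" "l<n" "i<n" "k'<n"
      "\<forall>a c. \<bar>u a c - w a c\<bar> \<le> rb j l c \<and> \<bar>u a c - w a c\<bar> \<le> rb i k' a" by auto
    from move_bound[OF m2] obtain j2 l2 i2 k2 where h2: "j2<n" "l2<n" "i2<n" "k2<n"
      "\<forall>a c. \<bar>w a c - v a c\<bar> \<le> rb j2 l2 c \<and> \<bar>w a c - v a c\<bar> \<le> rb i2 k2 a" by auto
    have X: "\<forall>a c. \<bar>u a c - v a c\<bar> \<le> rb j l c + rb j2 l2 c \<and> \<bar>u a c - v a c\<bar> \<le> rb i k' a + rb i2 k2 a"
    proof (intro allI)
      fix a c
      show "\<bar>u a c - v a c\<bar> \<le> rb j l c + rb j2 l2 c \<and> \<bar>u a c - v a c\<bar> \<le> rb i k' a + rb i2 k2 a"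
      proof -
        have "\<bar>u a c - v a c\<bar> \<le> \<bar>u a c - w a c\<bar> + \<bar>w a c - v a c\<bar>" using abs_triangle_ineq[of "u a c - w a c" "w a c - v a c"] by simp
        then show ?thesis using h(5)[rule_format, of a c] h2(5)[rule_format, of a c] by linarith
      qed
    qed
    show ?thesis apply (rule exI[of _ "j"], rule exI[of _ "l"], rule exI[of _ "j2"], rule exI[of _ "l2"], rule exI[of _ "i"], rule exI[of _ "k'"], rule exI[of _ "i2"], rule exI[of _ "k2"]) using h h2 X by simp
  qed
  show ?thesis
  proof (rule disjE[OF cs])
    assume "k = 0" then show ?thesis by (rule c0)
  next
    assume "k = 1 \<or> k = 2"
    then show ?thesis
    proof
      assume "k = 1" then show ?thesis by (rule c1)
    next
      assume "k = 2" then show ?thesis by (rule c2)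
    qed
  qed
qed

lemma dist_bound:
  assumes "G_dist_le n r u v 2" "n \<ge> 2"
  obtains j1 l1 j2 l2 i1 k1 i2 k2 where "j1<n" "l1<n" "j2<n" "l2<n" "i1<n" "k1<n" "i2<n" "k2<n"
    "\<forall>a c. \<bar>u a c - v a c\<bar> \<le> rb j1 l1 c + rb j2 l2 c \<and> \<bar>u a c - v a c\<bar> \<le> rb i1 k1 a + rb i2 k2 a"
  using dist_bound_ex[OF assms] by (elim exE conjE) (rule that; assumption)

theorem lemma2p4:
  fixes n r :: nat and u v :: "nat \<Rightarrow> nat \<Rightarrow> int"
  assumes "n \<ge> 2" and "r > 2"
    and "is_vertex n r u" and "is_vertex n r v"
    and "G_dist_le n r u v 2"
  shows "card {b \<in> markov_moves n. (\<forall>a c. u a c + b a c \<ge> 0) \<and> (\<forall>a c. v a c + b a c \<ge> 0)}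
           \<ge> n choose 2"
proof -
  define M where "M = (\<lambda>a c. u a c \<ge> 1 \<and> v a c \<ge> 1)"
  obtain j1 l1 j2 l2 i1 k1 i2 k2 where bl: "j1<n" "l1<n" "j2<n" "l2<n" "i1<n" "k1<n" "i2<n" "k2<n"
    and bnd: "\<forall>a c. \<bar>u a c - v a c\<bar> \<le> rb j1 l1 c + rb j2 l2 c \<and> \<bar>u a c - v a c\<bar> \<le> rb i1 k1 a + rb i2 k2 a"
    by (rule dist_bound[OF assms(5,1)])
  have unn1: "\<forall>a c. u a c \<ge> 0" using assms(3) unfolding is_vertex_def by blast
  have unn2: "\<forall>a c. v a c \<ge> 0" using assms(4) unfolding is_vertex_def by blast
  note unn = unn1 unn2
  have key: "\<And>a c. \<not> M a c \<Longrightarrow> u a c + v a c \<le> \<bar>u a c - v a c\<bar>"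
  proof -
    fix a c assume "\<not> M a c"
    then have "u a c < 1 \<or> v a c < 1" by (auto simp: M_def)
    moreover have "u a c \<ge> 0" "v a c \<ge> 0" using unn by auto
    ultimately have "u a c = 0 \<or> v a c = 0" by linarith
    then show "u a c + v a c \<le> \<bar>u a c - v a c\<bar>" using \<open>u a c \<ge> 0\<close> \<open>v a c \<ge> 0\<close> by auto
  qed
  have rows: "\<forall>i<n. \<exists>c<n. M i c"
  proof (intro allI impI, rule ccontr)
    fix i assume i: "i<n" and no: "\<not> (\<exists>c<n. M i c)"
    have "(\<Sum>c<n. u i c + v i c) \<le> (\<Sum>c<n. rb j1 l1 c + rb j2 l2 c)"
    proof (rule sum_mono)
      fix c assume "c \<in> {..<n}"
      with no have "u i c + v i c \<le> \<bar>u i c - v i c\<bar>" using key by auto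
      moreover have "\<bar>u i c - v i c\<bar> \<le> rb j1 l1 c + rb j2 l2 c" using bnd by blast
      ultimately show "u i c + v i c \<le> rb j1 l1 c + rb j2 l2 c" by linarith
    qed
    also have "\<dots> = 4" using rb_sum bl by (simp add: sum.distrib)
    finally have "(\<Sum>c<n. u i c) + (\<Sum>c<n. v i c) \<le> 4" by (simp add: sum.distrib)
    moreover have "(\<Sum>c<n. u i c) = int r" "(\<Sum>c<n. v i c) = int r"
      using assms(3,4) i by (auto simp: is_vertex_def)
    ultimately show False using assms(2) by simp
  qed
  have cols: "\<forall>c<n. \<exists>i<n. M i c"
  proof (intro allI impI, rule ccontr)
    fix c assume c: "c<n" and no: "\<not> (\<exists>i<n. M i c)"
    have "(\<Sum>a<n. u a c + v a c) \<le> (\<Sum>a<n. rb i1 k1 a + rb i2 k2 a)"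
    proof (rule sum_mono)
      fix a assume "a \<in> {..<n}"
      with no have "u a c + v a c \<le> \<bar>u a c - v a c\<bar>" using key by auto
      moreover have "\<bar>u a c - v a c\<bar> \<le> rb i1 k1 a + rb i2 k2 a" using bnd by blast
      ultimately show "u a c + v a c \<le> rb i1 k1 a + rb i2 k2 a" by linarith
    qed
    also have "\<dots> = 4" using rb_sum bl by (simp add: sum.distrib)
    finally have "(\<Sum>a<n. u a c) + (\<Sum>a<n. v a c) \<le> 4" by (simp add: sum.distrib)
    moreover have "(\<Sum>a<n. u a c) = int r" "(\<Sum>a<n. v a c) = int r"
      using assms(3,4) c by (auto simp: is_vertex_def)
    ultimately show False using assms(2) by simp
  qed
  let ?T = "{b \<in> markov_moves n. (\<forall>a c. u a c + b a c \<ge> 0) \<and> (\<forall>a c. v a c + b a c \<ge> 0)}"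
  have fin: "finite ?T" using fin_moves by auto
  have inT: "nm i j k l \<in> ?T" if h: "i<n" "j<n" "k<n" "l<n" "i\<noteq>k" "j\<noteq>l" "M i j" "M k l" for i j k l
  proof -
    have valid: "w a c + nm i j k l a c \<ge> 0" if w: "\<forall>a c. w a c \<ge> 0" "w i j \<ge> 1" "w k l \<ge> 1" for w a c
    proof (cases "nm i j k l a c < 0")
      case True
      then have "(a = i \<and> c = j) \<or> (a = k \<and> c = l)" using nm_neg[OF h(5,6)] by blast
      then have "w a c \<ge> 1" using w by auto
      moreover have "nm i j k l a c \<ge> -1" using nm_ge[OF h(5,6)] by blast
      ultimately show ?thesis by simp
    next
      case False
      then show ?thesis using w(1)[rule_format, of a c] by simp
    qed
    have "u i j \<ge> 1" "u k l \<ge> 1" "v i j \<ge> 1" "v k l \<ge> 1" using h(7,8) by (auto simp: M_def)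
    then have "\<forall>a c. u a c + nm i j k l a c \<ge> 0" "\<forall>a c. v a c + nm i j k l a c \<ge> 0"
      using valid[of u] valid[of v] unn by blast+
    then show ?thesis using nm_mem[OF h(1,3,2,4,5,6)] by blast
  qed
  show ?thesis by (rule comb[OF rows cols fin]) (rule inT; assumption)
qed

end
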